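(* With the notation of the context, the following equalities of sets of eigenvalues hold: \[\Lambda_N[T]\cup\Lambda_D[T]=\Lambda_P[2T],\quad \Lambda_N[T]\cup\Lambda_{M_1}[T]=\Lambda_N[2T],\quad \Lambda_D[T]\cup\Lambda_{M_2}[T]=\Lambda_D[2T],\] \[\Lambda_{M_1}[T]\cup\Lambda_{M_2}[T]=\Lambda_A[2T],\quad \Lambda_N[T]\cup\Lambda_D[T]\cup\Lambda_{M_1}[T]\cup\Lambda_{M_2}[T]=\Lambda_P[4T].\] Moreover, $\Lambda_{M_1}[T]=\check\Lambda_{M_2}[T]$ and $\Lambda_{M_2}[T]=\check\Lambda_{M_1}[T]$.
   Context: Fix $n\ge 1$, $T>0$, $I=[0,T]$, $J=[0,2T]$. $W^{2n,1}(K)$: $u\in C^{2n-1}(K)$ with $u^{(2n-1)}$ absolutely continuous. Let $a_0,\dots,a_{2n-1}\in L^{\alpha}(I)$, $\alpha\ge1$, $Lu=u^{(2n)}+\sum_{k=0}^{2n-1}a_ku^{(k)}$ on $I$. $\widetilde L u=u^{(2n)}+\sum_{k=0}^{n-1}(\hat a_{2k+1}u^{(2k+1)}+\tilde a_{2k}u^{(2k)})$ on $J$, where $\tilde a_{2k}=a_{2k}$, $\hat a_{2k+1}=a_{2k+1}$ on $I$, and $\tilde a_{2k}(t)=a_{2k}(2T-t)$, $\hat a_{2k+1}(t)=-a_{2k+1}(2T-t)$ for $t\in(T,2T]$; $\widetilde{\widetilde L}$ on $[0,4T]$ is obtained by the same construction from $\widetilde L$ (reflection about $2T$). $\check L u(t)=u^{(2n)}(t)+\sum_{k=0}^{2n-1}(-1)^ka_k(T-t)u^{(k)}(t)$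 on $I$. For an operator $M$ and $\lambda\in\mathbb R$, $M[\lambda]u=Mu+\lambda u$ (i.e. the zero-order coefficient is increased by $\lambda$). A real $\lambda$ is an eigenvalue of the problem "$M$ on $X$" if $M[\lambda]u=0$ a.e. has a nontrivial solution $u\in X$. Spaces ($k=0,\dots,n-1$ unless stated): $X_{N,T}$: $u^{(2k+1)}(0)=u^{(2k+1)}(T)=0$; $X_{D,T}$: $u^{(2k)}(0)=u^{(2k)}(T)=0$; $X_{M_1,T}$: $u^{(2k+1)}(0)=u^{(2k)}(T)=0$; $X_{M_2,T}$: $u^{(2k)}(0)=u^{(2k+1)}(T)=0$ (in $W^{2n,1}(I)$); $X_{P,2T}$: $u^{(k)}(0)=u^{(k)}(2T)$, $k=0,\dots,2n-1$; $X_{A,2T}$: $u^{(k)}(0)=-u^{(k)}(2T)$, $k=0,\dots,2n-1$; $X_{N,2T}$: $u^{(2k+1)}(0)=u^{(2k+1)}(2T)=0$; $X_{D,2T}$: $u^{(2k)}(0)=u^{(2k)}(2T)=0$ (in $W^{2n,1}(J)$); $X_{P,4T}$: $u^{(k)}(0)=u^{(k)}(4T)$, $k=0,\dots,2n-1$ (in $W^{2n,1}([0,4T])$). $\Lambda_N[T],\Lambda_D[T],\Lambda_{M_1}[T],\Lambda_{M_2}[T]$ are the eigenvalue sets of $L$ on $X_{N,T},X_{D,T},X_{M_1,T},X_{M_2,T}$; $\Lambda_P[2T],\Lambda_A[2T],\Lambda_N[2T],\Lambda_D[2T]$ those of $\widetilde L$ on $X_{P,2T},X_{A,2T},X_{N,2T},X_{D,2T}$;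 $\Lambda_P[4T]$ that of $\widetilde{\widetilde L}$ on $X_{P,4T}$; $\check\Lambda_{M_1}[T],\check\Lambda_{M_2}[T]$ those of $\check L$ on $X_{M_1,T},X_{M_2,T}$. *)

theory Defs
  imports "HOL-Analysis.Analysis"
begin

definition abs_cont_on :: "real set \<Rightarrow> (real \<Rightarrow> real) \<Rightarrow> bool" where
  "abs_cont_on K f \<longleftrightarrow>
    (\<forall>\<epsilon>>0. \<exists>\<delta>>0. \<forall>(m::nat) (l::nat \<Rightarrow> real) (r::nat \<Rightarrow> real).
       (\<forall>i<m. l i \<in> K \<and> r i \<in> K \<and> l i \<le> r i) \<and>
       (\<forall>i<m. \<forall>j<m. i \<noteq> j \<longrightarrow> r i \<le> l j \<or> r j \<le> l i) \<and>
       (\<Sum>i<m. r i - l i) < \<delta>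
       \<longrightarrow> (\<Sum>i<m. \<bar>f (r i) - f (l i)\<bar>) < \<epsilon>)"

text \<open>D is the list of derivatives u = D 0, u' = D 1, ..., u^(2n-1) = D (2n-1) of a function
  u in W^{2n,1}(K): the D k are successive derivatives on K (one-sided at the endpoints),
  hence u is C^{2n-1}, and D (2n-1) is absolutely continuous.\<close>
definition W2n1 :: "nat \<Rightarrow> real set \<Rightarrow> (nat \<Rightarrow> real \<Rightarrow> real) \<Rightarrow> bool" where
  "W2n1 n K D \<longleftrightarrow>
    (\<forall>k<2*n-1. \<forall>t\<in>K. (D k has_real_derivative D (Suc k) t) (at t within K)) \<and>
    abs_cont_on K (D (2*n-1))"

definition in_Lp :: "real \<Rightarrow> real set \<Rightarrow> (real \<Rightarrow> real) \<Rightarrow> bool" where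
  "in_Lp \<alpha> K a \<longleftrightarrow> a \<in> borel_measurable (lebesgue_on K) \<and>
      integrable (lebesgue_on K) (\<lambda>t. \<bar>a t\<bar> powr \<alpha>)"

text \<open>The operator M u = u^(2n) + sum_{k<2n} c k * u^(k) on [0,S]; lambda is an eigenvalue of
  M on the space given by boundary condition BC iff M[lambda]u = 0 a.e. has a nontrivial
  solution u = D 0 in W^{2n,1}([0,S]) satisfying BC.\<close>
definition is_eig :: "nat \<Rightarrow> real \<Rightarrow> (nat \<Rightarrow> real \<Rightarrow> real) \<Rightarrow> ((nat \<Rightarrow> real \<Rightarrow> real) \<Rightarrow> bool)
     \<Rightarrow> real \<Rightarrow> bool" where
  "is_eig n S c BC lam \<longleftrightarrow> (\<exists>D. W2n1 n {0..S} D \<and> BC D \<and> (\<exists>t\<in>{0..S}. D 0 t \<noteq> 0) \<and>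
     (AE t in lebesgue_on {0..S}.
        (D (2*n-1) has_real_derivative
           (- (\<Sum>k<2*n. c k t * D k t) - lam * D 0 t)) (at t within {0..S})))"

definition Eig :: "nat \<Rightarrow> real \<Rightarrow> (nat \<Rightarrow> real \<Rightarrow> real) \<Rightarrow> ((nat \<Rightarrow> real \<Rightarrow> real) \<Rightarrow> bool)
     \<Rightarrow> real set" where
  "Eig n S c BC = {lam. is_eig n S c BC lam}"

definition bcN :: "nat \<Rightarrow> real \<Rightarrow> (nat \<Rightarrow> real \<Rightarrow> real) \<Rightarrow> bool" where
  "bcN n S D \<longleftrightarrow> (\<forall>k<n. D (2*k+1) 0 = 0 \<and> D (2*k+1) S = 0)"
definition bcD :: "nat \<Rightarrow> real \<Rightarrow> (nat \<Rightarrow> real \<Rightarrow> real) \<Rightarrow> bool" where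
  "bcD n S D \<longleftrightarrow> (\<forall>k<n. D (2*k) 0 = 0 \<and> D (2*k) S = 0)"
definition bcM1 :: "nat \<Rightarrow> real \<Rightarrow> (nat \<Rightarrow> real \<Rightarrow> real) \<Rightarrow> bool" where
  "bcM1 n S D \<longleftrightarrow> (\<forall>k<n. D (2*k+1) 0 = 0 \<and> D (2*k) S = 0)"
definition bcM2 :: "nat \<Rightarrow> real \<Rightarrow> (nat \<Rightarrow> real \<Rightarrow> real) \<Rightarrow> bool" where
  "bcM2 n S D \<longleftrightarrow> (\<forall>k<n. D (2*k) 0 = 0 \<and> D (2*k+1) S = 0)"
definition bcP :: "nat \<Rightarrow> real \<Rightarrow> (nat \<Rightarrow> real \<Rightarrow> real) \<Rightarrow> bool" where
  "bcP n S D \<longleftrightarrow> (\<forall>k<2*n. D k 0 = D k S)"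
definition bcA :: "nat \<Rightarrow> real \<Rightarrow> (nat \<Rightarrow> real \<Rightarrow> real) \<Rightarrow> bool" where
  "bcA n S D \<longleftrightarrow> (\<forall>k<2*n. D k 0 = - D k S)"

text \<open>Reflection of coefficients about S: on [0,S] unchanged, on (S,2S] the k-th coefficient
  becomes (-1)^k c_k(2S - t).  (Gives tilde-L from L with S = T, and the double tilde from
  tilde-L with S = 2T.)\<close>
definition refl_coef :: "real \<Rightarrow> (nat \<Rightarrow> real \<Rightarrow> real) \<Rightarrow> nat \<Rightarrow> real \<Rightarrow> real" where
  "refl_coef S c k t = (if t \<le> S then c k t else (-1)^k * c k (2*S - t))"

definition check_coef :: "real \<Rightarrow> (nat \<Rightarrow> real \<Rightarrow> real) \<Rightarrow> nat \<Rightarrow> real \<Rightarrow> real" where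
  "check_coef T c k t = (-1)^k * c k (T - t)"

end

theory Submission
  imports Defs
begin


definition adm :: "real set \<Rightarrow> nat \<Rightarrow> (nat \<Rightarrow> real) \<Rightarrow> (nat \<Rightarrow> real) \<Rightarrow> real \<Rightarrow> bool" where
  "adm K m l r \<delta> \<longleftrightarrow> (\<forall>i<m. l i \<in> K \<and> r i \<in> K \<and> l i \<le> r i) \<and>
       (\<forall>i<m. \<forall>j<m. i \<noteq> j \<longrightarrow> r i \<le> l j \<or> r j \<le> l i) \<and>
       (\<Sum>i<m. r i - l i) < \<delta>"

lemma abs_cont_alt: "abs_cont_on K f \<longleftrightarrow>
   (\<forall>\<epsilon>>0. \<exists>\<delta>>0. \<forall>m l r. adm K m l r \<delta> \<longrightarrow> (\<Sum>i<m. \<bar>f (r i) - f (l i)\<bar>) < \<epsilon>)"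
  unfolding abs_cont_on_def adm_def by simp

lemma abs_contI:
  assumes "\<And>\<epsilon>. \<epsilon> > 0 \<Longrightarrow> \<exists>\<delta>>0. \<forall>m l r. adm K m l r \<delta> \<longrightarrow> (\<Sum>i<m. \<bar>f (r i) - f (l i)\<bar>) < \<epsilon>"
  shows "abs_cont_on K f"
  using assms unfolding abs_cont_alt by blast

lemma abs_contE:
  assumes "abs_cont_on K f" "\<epsilon> > 0"
  obtains \<delta> where "\<delta> > 0" "\<And>m l r. adm K m l r \<delta> \<Longrightarrow> (\<Sum>i<m. \<bar>f (r i) - f (l i)\<bar>) < \<epsilon>"
  using assms unfolding abs_cont_alt by blast

lemma abs_cont_cong:
  assumes sub: "K' \<subseteq> K" and h: "\<And>t. t \<in> K' \<Longrightarrow> f t = g t" and f: "abs_cont_on K f"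
  shows "abs_cont_on K' g"
proof (rule abs_contI)
  fix \<epsilon> :: real assume e: "\<epsilon> > 0"
  obtain \<delta> where d: "\<delta> > 0" and H: "\<And>m l r. adm K m l r \<delta> \<Longrightarrow> (\<Sum>i<m. \<bar>f (r i) - f (l i)\<bar>) < \<epsilon>"
    using abs_contE[OF f e] by blast
  show "\<exists>\<delta>>0. \<forall>m l r. adm K' m l r \<delta> \<longrightarrow> (\<Sum>i<m. \<bar>g (r i) - g (l i)\<bar>) < \<epsilon>"
  proof (intro exI[of _ \<delta>] conjI allI impI d)
    fix m l r assume A: "adm K' m l r \<delta>"
    have A1: "adm K m l r \<delta>" using A sub unfolding adm_def by blast
    have "(\<Sum>i<m. \<bar>g (r i) - g (l i)\<bar>) = (\<Sum>i<m. \<bar>f (r i) - f (l i)\<bar>)"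
      using A h unfolding adm_def by (intro sum.cong) auto
    then show "(\<Sum>i<m. \<bar>g (r i) - g (l i)\<bar>) < \<epsilon>" using H[OF A1] by simp
  qed
qed

lemma abs_cont_subset: "K' \<subseteq> K \<Longrightarrow> abs_cont_on K f \<Longrightarrow> abs_cont_on K' f"
  by (rule abs_cont_cong) auto

lemma abs_cont_lin:
  assumes f: "abs_cont_on K f" and g: "abs_cont_on K g"
  shows "abs_cont_on K (\<lambda>t. p * f t + q * g t)"
proof (rule abs_contI)
  fix \<epsilon> :: real assume e: "\<epsilon> > 0"
  have e1: "\<epsilon> / (2 * (\<bar>p\<bar> + 1)) > 0" and e2: "\<epsilon> / (2 * (\<bar>q\<bar> + 1)) > 0" using e by auto
  obtain d1 where d1: "d1 > 0" and H1: "\<And>m l r. adm K m l r d1 \<Longrightarrow>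
       (\<Sum>i<m. \<bar>f (r i) - f (l i)\<bar>) < \<epsilon> / (2 * (\<bar>p\<bar> + 1))"
    using abs_contE[OF f e1] by blast
  obtain d2 where d2: "d2 > 0" and H2: "\<And>m l r. adm K m l r d2 \<Longrightarrow>
       (\<Sum>i<m. \<bar>g (r i) - g (l i)\<bar>) < \<epsilon> / (2 * (\<bar>q\<bar> + 1))"
    using abs_contE[OF g e2] by blast
  show "\<exists>\<delta>>0. \<forall>m l r. adm K m l r \<delta> \<longrightarrow>
       (\<Sum>i<m. \<bar>(p * f (r i) + q * g (r i)) - (p * f (l i) + q * g (l i))\<bar>) < \<epsilon>"
  proof (intro exI[of _ "min d1 d2"] conjI allI impI)
    show "min d1 d2 > 0" using d1 d2 by auto
    fix m l r assume A: "adm K m l r (min d1 d2)"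
    have s1: "(\<Sum>i<m. \<bar>f (r i) - f (l i)\<bar>) < \<epsilon> / (2 * (\<bar>p\<bar> + 1))"
      using A by (intro H1) (auto simp: adm_def)
    have s2: "(\<Sum>i<m. \<bar>g (r i) - g (l i)\<bar>) < \<epsilon> / (2 * (\<bar>q\<bar> + 1))"
      using A by (intro H2) (auto simp: adm_def)
    have "(\<Sum>i<m. \<bar>(p * f (r i) + q * g (r i)) - (p * f (l i) + q * g (l i))\<bar>)
        \<le> (\<Sum>i<m. \<bar>p\<bar> * \<bar>f (r i) - f (l i)\<bar> + \<bar>q\<bar> * \<bar>g (r i) - g (l i)\<bar>)"
    proof (rule sum_mono)
      fix i
      have "\<bar>(p * f (r i) + q * g (r i)) - (p * f (l i) + q * g (l i))\<bar>
          = \<bar>p * (f (r i) - f (l i)) + q * (g (r i) - g (l i))\<bar>" by (simp add: algebra_simps)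
      also have "\<dots> \<le> \<bar>p\<bar> * \<bar>f (r i) - f (l i)\<bar> + \<bar>q\<bar> * \<bar>g (r i) - g (l i)\<bar>"
        by (metis abs_mult abs_triangle_ineq)
      finally show "\<bar>(p * f (r i) + q * g (r i)) - (p * f (l i) + q * g (l i))\<bar>
          \<le> \<bar>p\<bar> * \<bar>f (r i) - f (l i)\<bar> + \<bar>q\<bar> * \<bar>g (r i) - g (l i)\<bar>" .
    qed
    also have "\<dots> = \<bar>p\<bar> * (\<Sum>i<m. \<bar>f (r i) - f (l i)\<bar>) + \<bar>q\<bar> * (\<Sum>i<m. \<bar>g (r i) - g (l i)\<bar>)"
      by (simp add: sum.distrib sum_distrib_left)
    also have "\<dots> \<le> \<bar>p\<bar> * (\<epsilon> / (2 * (\<bar>p\<bar> + 1))) + \<bar>q\<bar> * (\<epsilon> / (2 * (\<bar>q\<bar> + 1)))"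
      using s1 s2 by (intro add_mono mult_left_mono) auto
    also have "\<dots> < \<epsilon>"
    proof -
      have a: "\<bar>p\<bar> * (\<epsilon> / (2 * (\<bar>p\<bar> + 1))) < \<epsilon>/2" using e
        by (simp add: field_simps)
      have b: "\<bar>q\<bar> * (\<epsilon> / (2 * (\<bar>q\<bar> + 1))) < \<epsilon>/2" using e
        by (simp add: field_simps)
      show ?thesis using a b by linarith
    qed
    finally show "(\<Sum>i<m. \<bar>(p * f (r i) + q * g (r i)) - (p * f (l i) + q * g (l i))\<bar>) < \<epsilon>" .
  qed
qed

lemma abs_cont_refl:
  assumes f: "abs_cont_on K f"
  shows "abs_cont_on ((\<lambda>t. m - t) ` K) (\<lambda>t. f (m - t))"
proof (rule abs_contI)
  fix \<epsilon> :: real assume e: "\<epsilon> > 0"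
  obtain d where d: "d > 0" and H: "\<And>mm l r. adm K mm l r d \<Longrightarrow> (\<Sum>i<mm. \<bar>f (r i) - f (l i)\<bar>) < \<epsilon>"
    using abs_contE[OF f e] by blast
  show "\<exists>\<delta>>0. \<forall>mm l r. adm ((\<lambda>t. m - t) ` K) mm l r \<delta> \<longrightarrow>
       (\<Sum>i<mm. \<bar>f (m - r i) - f (m - l i)\<bar>) < \<epsilon>"
  proof (intro exI[of _ d] conjI allI impI d)
    fix mm l r assume A: "adm ((\<lambda>t. m - t) ` K) mm l r d"
    define l' where "l' = (\<lambda>i. m - r i)"
    define r' where "r' = (\<lambda>i. m - l i)"
    have c1: "\<forall>i<mm. l' i \<in> K \<and> r' i \<in> K \<and> l' i \<le> r' i"
      using A unfolding l'_def r'_def adm_def by (auto simp: image_iff)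
    have c2: "\<forall>i<mm. \<forall>j<mm. i \<noteq> j \<longrightarrow> r' i \<le> l' j \<or> r' j \<le> l' i"
    proof (intro allI impI)
      fix i j assume "i < mm" "j < mm" "i \<noteq> j"
      then have "r i \<le> l j \<or> r j \<le> l i" using A unfolding adm_def by blast
      then show "r' i \<le> l' j \<or> r' j \<le> l' i" unfolding l'_def r'_def by linarith
    qed
    have c3: "(\<Sum>i<mm. r' i - l' i) < d"
      using A unfolding l'_def r'_def adm_def by simp
    have "(\<Sum>i<mm. \<bar>f (r' i) - f (l' i)\<bar>) < \<epsilon>" using H c1 c2 c3 unfolding adm_def by blast
    moreover have "(\<Sum>i<mm. \<bar>f (m - r i) - f (m - l i)\<bar>) = (\<Sum>i<mm. \<bar>f (r' i) - f (l' i)\<bar>)"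
      unfolding l'_def r'_def by (intro sum.cong) auto
    ultimately show "(\<Sum>i<mm. \<bar>f (m - r i) - f (m - l i)\<bar>) < \<epsilon>" by simp
  qed
qed



lemma abs_cont_glue:
  assumes ab: "a \<le> b" and bd: "b \<le> d"
    and f1: "abs_cont_on {a..b} f" and f2: "abs_cont_on {b..d} f"
  shows "abs_cont_on {a..d} f"
proof (rule abs_contI)
  fix \<epsilon> :: real assume e: "\<epsilon> > 0"
  then have e2: "\<epsilon>/2 > 0" by simp
  obtain d1 where d1: "d1 > 0" and H1: "\<And>m l r. adm {a..b} m l r d1 \<Longrightarrow>
       (\<Sum>i<m. \<bar>f (r i) - f (l i)\<bar>) < \<epsilon>/2"
    using abs_contE[OF f1 e2] by blast
  obtain d2 where d2: "d2 > 0" and H2: "\<And>m l r. adm {b..d} m l r d2 \<Longrightarrow>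
       (\<Sum>i<m. \<bar>f (r i) - f (l i)\<bar>) < \<epsilon>/2"
    using abs_contE[OF f2 e2] by blast
  show "\<exists>\<delta>>0. \<forall>m l r. adm {a..d} m l r \<delta> \<longrightarrow> (\<Sum>i<m. \<bar>f (r i) - f (l i)\<bar>) < \<epsilon>"
  proof (intro exI[of _ "min d1 d2"] conjI allI impI)
    show "min d1 d2 > 0" using d1 d2 by auto
    fix m l r assume A: "adm {a..d} m l r (min d1 d2)"
    define l1 where "l1 = (\<lambda>i. min (l i) b)"
    define r1 where "r1 = (\<lambda>i. min (r i) b)"
    define l2 where "l2 = (\<lambda>i. max (l i) b)"
    define r2 where "r2 = (\<lambda>i. max (r i) b)"
    have A1: "\<forall>i<m. l i \<in> {a..d} \<and> r i \<in> {a..d} \<and> l i \<le> r i"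
      and A2: "\<forall>i<m. \<forall>j<m. i \<noteq> j \<longrightarrow> r i \<le> l j \<or> r j \<le> l i"
      and A3: "(\<Sum>i<m. r i - l i) < min d1 d2" using A unfolding adm_def by auto
    have len1: "(\<Sum>i<m. r1 i - l1 i) \<le> (\<Sum>i<m. r i - l i)"
      by (intro sum_mono) (use A1 in \<open>auto simp: l1_def r1_def\<close>)
    have len2: "(\<Sum>i<m. r2 i - l2 i) \<le> (\<Sum>i<m. r i - l i)"
      by (intro sum_mono) (use A1 in \<open>auto simp: l2_def r2_def\<close>)
    have adm1: "adm {a..b} m l1 r1 d1" unfolding adm_def
    proof (intro conjI)
      show "\<forall>i<m. l1 i \<in> {a..b} \<and> r1 i \<in> {a..b} \<and> l1 i \<le> r1 i"
        using A1 ab unfolding l1_def r1_def by auto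
      show "\<forall>i<m. \<forall>j<m. i \<noteq> j \<longrightarrow> r1 i \<le> l1 j \<or> r1 j \<le> l1 i"
      proof (intro allI impI)
        fix i j assume "i < m" "j < m" "i \<noteq> j"
        then have "r i \<le> l j \<or> r j \<le> l i" using A2 by blast
        then show "r1 i \<le> l1 j \<or> r1 j \<le> l1 i" unfolding l1_def r1_def by linarith
      qed
      show "(\<Sum>i<m. r1 i - l1 i) < d1" using len1 A3 by linarith
    qed
    have adm2: "adm {b..d} m l2 r2 d2" unfolding adm_def
    proof (intro conjI)
      show "\<forall>i<m. l2 i \<in> {b..d} \<and> r2 i \<in> {b..d} \<and> l2 i \<le> r2 i"
        using A1 bd unfolding l2_def r2_def by auto
      show "\<forall>i<m. \<forall>j<m. i \<noteq> j \<longrightarrow> r2 i \<le> l2 j \<or> r2 j \<le> l2 i"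
      proof (intro allI impI)
        fix i j assume "i < m" "j < m" "i \<noteq> j"
        then have "r i \<le> l j \<or> r j \<le> l i" using A2 by blast
        then show "r2 i \<le> l2 j \<or> r2 j \<le> l2 i" unfolding l2_def r2_def by linarith
      qed
      show "(\<Sum>i<m. r2 i - l2 i) < d2" using len2 A3 by linarith
    qed
    have "(\<Sum>i<m. \<bar>f (r i) - f (l i)\<bar>) \<le>
        (\<Sum>i<m. \<bar>f (r1 i) - f (l1 i)\<bar> + \<bar>f (r2 i) - f (l2 i)\<bar>)"
    proof (rule sum_mono)
      fix i assume "i \<in> {..<m}"
      then have lr: "l i \<le> r i" using A1 by auto
      have "f (r i) - f (l i) = (f (r1 i) - f (l1 i)) + (f (r2 i) - f (l2 i))"
      proof (cases "r i \<le> b")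
        case True then show ?thesis using lr by (simp add: l1_def r1_def l2_def r2_def)
      next
        case False
        show ?thesis
        proof (cases "l i \<le> b")
          case True then show ?thesis using False by (simp add: l1_def r1_def l2_def r2_def)
        next
          case F2: False then show ?thesis using False by (simp add: l1_def r1_def l2_def r2_def)
        qed
      qed
      then show "\<bar>f (r i) - f (l i)\<bar> \<le> \<bar>f (r1 i) - f (l1 i)\<bar> + \<bar>f (r2 i) - f (l2 i)\<bar>"
        by linarith
    qed
    also have "\<dots> = (\<Sum>i<m. \<bar>f (r1 i) - f (l1 i)\<bar>) + (\<Sum>i<m. \<bar>f (r2 i) - f (l2 i)\<bar>)"
      by (simp add: sum.distrib)
    also have "\<dots> < \<epsilon>/2 + \<epsilon>/2" using H1[OF adm1] H2[OF adm2] by linarith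
    finally show "(\<Sum>i<m. \<bar>f (r i) - f (l i)\<bar>) < \<epsilon>" by simp
  qed
qed



lemma deriv_trivial:
  fixes f :: "real \<Rightarrow> real"
  assumes "t \<notin> K" "closed K"
  shows "(f has_field_derivative D) (at t within K)"
proof -
  have "\<not> t islimpt K" using assms closed_limpt by blast
  then have "trivial_limit (at t within K)" using trivial_limit_within by blast
  then show ?thesis unfolding has_field_derivative_iff by (rule Lim_trivial_limit)
qed

lemma deriv_glue:
  fixes f :: "real \<Rightarrow> real"
  assumes "a \<le> b" "b \<le> d" "t \<in> {a..d}"
    and h1: "t \<in> {a..b} \<Longrightarrow> (f has_field_derivative D) (at t within {a..b})"
    and h2: "t \<in> {b..d} \<Longrightarrow> (f has_field_derivative D) (at t within {b..d})"
  shows "(f has_field_derivative D) (at t within {a..d})"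
proof -
  have U: "{a..d} = {a..b} \<union> {b..d}" using assms by auto
  have 1: "(f has_field_derivative D) (at t within {a..b})"
    using h1 deriv_trivial[of t "{a..b}"] by blast
  have 2: "(f has_field_derivative D) (at t within {b..d})"
    using h2 deriv_trivial[of t "{b..d}"] by blast
  show ?thesis unfolding U using 1 2 unfolding has_field_derivative_iff
    by (simp add: Lim_within_Un)
qed

lemma AE_lebesgue_on_iff:
  "(AE t in lebesgue_on {a..b::real}. P t) \<longleftrightarrow> (\<exists>N. negligible N \<and> (\<forall>t\<in>{a..b} - N. P t))"
proof -
  have "(AE t in lebesgue_on {a..b}. P t) \<longleftrightarrow> (AE t in lebesgue. t \<in> {a..b} \<longrightarrow> P t)"
    by (rule AE_restrict_space_iff) simp
  also have "\<dots> \<longleftrightarrow> (\<exists>N\<in>null_sets lebesgue. {t. \<not> (t \<in> {a..b} \<longrightarrow> P t)} \<subseteq> N)"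
    by (simp add: eventually_ae_filter)
  also have "\<dots> \<longleftrightarrow> (\<exists>N. negligible N \<and> (\<forall>t\<in>{a..b} - N. P t))"
    unfolding negligible_iff_null_sets by (intro iffI; elim bexE exE conjE; (intro bexI exI conjI)?) auto
  finally show ?thesis .
qed

lemma negligible_refl: "negligible N \<Longrightarrow> negligible ((\<lambda>t::real. m - t) ` N)"
  by (rule negligible_differentiable_image_negligible) (auto intro!: derivative_intros)

lemma refl_image: "(\<lambda>t. m - t) ` {a..b::real} = {m-b..m-a}" by auto

lemma deriv_refl:
  fixes f :: "real \<Rightarrow> real"
  assumes "(f has_field_derivative V) (at (m - t) within K)"
  shows "((\<lambda>t. x * f (m - t)) has_field_derivative (- x * V)) (at t within (\<lambda>t. m - t) ` K)"
proof -
  have im: "(\<lambda>t. m - t) ` ((\<lambda>t. m - t) ` K) = K" by (auto simp: image_iff)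
  have g: "((\<lambda>t. m - t) has_field_derivative -1) (at t within (\<lambda>t. m - t) ` K)"
    by (auto intro!: derivative_eq_intros)
  have "(f \<circ> (\<lambda>t. m - t) has_field_derivative V * -1) (at t within (\<lambda>t. m - t) ` K)"
    by (rule DERIV_image_chain[OF _ g]) (use assms im in simp)
  then have "((\<lambda>t. f (m - t)) has_field_derivative - V) (at t within (\<lambda>t. m - t) ` K)"
    by (simp add: o_def)
  then show ?thesis using DERIV_cmult[of _ "-V" t _ x] by simp
qed



definition solK :: "nat \<Rightarrow> real set \<Rightarrow> (nat \<Rightarrow> real \<Rightarrow> real) \<Rightarrow> real \<Rightarrow> (nat \<Rightarrow> real \<Rightarrow> real) \<Rightarrow> bool" where
  "solK n K c lam D \<longleftrightarrow> W2n1 n K D \<and> (\<exists>N. negligible N \<and> (\<forall>t\<in>K - N.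
      (D (2*n-1) has_real_derivative (- (\<Sum>k<2*n. c k t * D k t) - lam * D 0 t)) (at t within K)))"

lemma is_eig_iff: "is_eig n S c BC lam \<longleftrightarrow>
   (\<exists>D. solK n {0..S} c lam D \<and> BC D \<and> (\<exists>t\<in>{0..S}. D 0 t \<noteq> 0))"
  unfolding is_eig_def solK_def AE_lebesgue_on_iff by blast

lemma neg1_sq: "(-1::real)^k * (-1)^k = 1"
  by (simp add: power_mult_distrib[symmetric])

lemma odd_idx: "1 \<le> n \<Longrightarrow> (-1::real)^(2*n-1) = -1"
  by (rule neg_one_odd_power) presburger

lemma odd_idx': "1 \<le> n \<Longrightarrow> (-1::real)^(2*n - Suc 0) = -1"
  using odd_idx by simp

lemma solK_subset:
  assumes "K' \<subseteq> K" "solK n K c lam D" shows "solK n K' c lam D"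
proof -
  from assms(2) obtain N where W: "W2n1 n K D" and N: "negligible N" and
    E: "\<forall>t\<in>K - N. (D (2*n-1) has_real_derivative (- (\<Sum>k<2*n. c k t * D k t) - lam * D 0 t)) (at t within K)"
    unfolding solK_def by blast
  have "W2n1 n K' D" using W assms(1) unfolding W2n1_def
    by (auto intro: DERIV_subset abs_cont_subset)
  moreover have "\<forall>t\<in>K' - N. (D (2*n-1) has_real_derivative (- (\<Sum>k<2*n. c k t * D k t) - lam * D 0 t)) (at t within K')"
    using E assms(1) by (auto intro: DERIV_subset)
  ultimately show ?thesis unfolding solK_def using N by blast
qed

lemma solK_coef:
  assumes "solK n K c lam D" "negligible Z" "\<And>k t. k < 2*n \<Longrightarrow> t \<in> K \<Longrightarrow> t \<notin> Z \<Longrightarrow> c k t = c' k t"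
  shows "solK n K c' lam D"
proof -
  from assms(1) obtain N where W: "W2n1 n K D" and N: "negligible N" and
    E: "\<forall>t\<in>K - N. (D (2*n-1) has_real_derivative (- (\<Sum>k<2*n. c k t * D k t) - lam * D 0 t)) (at t within K)"
    unfolding solK_def by blast
  have "\<forall>t\<in>K - (N \<union> Z). (D (2*n-1) has_real_derivative (- (\<Sum>k<2*n. c' k t * D k t) - lam * D 0 t)) (at t within K)"
  proof
    fix t assume t: "t \<in> K - (N \<union> Z)"
    have "(\<Sum>k<2*n. c k t * D k t) = (\<Sum>k<2*n. c' k t * D k t)"
      using t assms(3) by (intro sum.cong) auto
    have d: "(D (2*n-1) has_real_derivative (- (\<Sum>k<2*n. c k t * D k t) - lam * D 0 t)) (at t within K)"
      using E t by blast
    show "(D (2*n-1) has_real_derivative (- (\<Sum>k<2*n. c' k t * D k t) - lam * D 0 t)) (at t within K)"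
      by (rule DERIV_cong[OF d]) (simp add: \<open>(\<Sum>k<2*n. c k t * D k t) = (\<Sum>k<2*n. c' k t * D k t)\<close>)
  qed
  then show ?thesis unfolding solK_def using W N assms(2) negligible_Un by blast
qed

lemma solK_cong:
  assumes n: "1 \<le> n" and S: "solK n K c lam D" and eq: "\<And>k t. k < 2*n \<Longrightarrow> t \<in> K \<Longrightarrow> D k t = D' k t"
  shows "solK n K c lam D'"
proof -
  from S obtain N where W: "W2n1 n K D" and N: "negligible N" and
    E: "\<forall>t\<in>K - N. (D (2*n-1) has_real_derivative (- (\<Sum>k<2*n. c k t * D k t) - lam * D 0 t)) (at t within K)"
    unfolding solK_def by blast
  have W': "W2n1 n K D'" unfolding W2n1_def
  proof (intro conjI ballI allI impI)
    fix k t assume k: "k < 2*n-1" and t: "t \<in> K"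
    have "(D k has_real_derivative D (Suc k) t) (at t within K)" using W k t unfolding W2n1_def by blast
    then have "(D' k has_real_derivative D (Suc k) t) (at t within K)"
      by (rule has_field_derivative_transform_within[OF _ zero_less_one t]) (use eq k in auto)
    then show "(D' k has_real_derivative D' (Suc k) t) (at t within K)" using eq[of "Suc k" t] k t by simp
  next
    show "abs_cont_on K (D' (2*n-1))"
      by (rule abs_cont_cong[of K K "D (2*n-1)"]) (use eq n W in \<open>auto simp: W2n1_def\<close>)
  qed
  have "\<forall>t\<in>K - N. (D' (2*n-1) has_real_derivative (- (\<Sum>k<2*n. c k t * D' k t) - lam * D' 0 t)) (at t within K)"
  proof
    fix t assume t: "t \<in> K - N"
    have s: "(\<Sum>k<2*n. c k t * D k t) = (\<Sum>k<2*n. c k t * D' k t)"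
      using t eq by (intro sum.cong) auto
    have "(D (2*n-1) has_real_derivative (- (\<Sum>k<2*n. c k t * D k t) - lam * D 0 t)) (at t within K)"
      using E t by auto
    then have "(D' (2*n-1) has_real_derivative (- (\<Sum>k<2*n. c k t * D k t) - lam * D 0 t)) (at t within K)"
      by (rule has_field_derivative_transform_within[OF _ zero_less_one]) (use eq n t in auto)
    then show "(D' (2*n-1) has_real_derivative (- (\<Sum>k<2*n. c k t * D' k t) - lam * D' 0 t)) (at t within K)"
      using s eq[of 0 t] n t by simp
  qed
  then show ?thesis unfolding solK_def using W' N by blast
qed

lemma solK_lin:
  assumes S1: "solK n K c lam D1" and S2: "solK n K c lam D2"
  shows "solK n K c lam (\<lambda>k t. p * D1 k t + q * D2 k t)"
proof -
  from S1 obtain N1 where W1: "W2n1 n K D1" and N1: "negligible N1" and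
    E1: "\<forall>t\<in>K - N1. (D1 (2*n-1) has_real_derivative (- (\<Sum>k<2*n. c k t * D1 k t) - lam * D1 0 t)) (at t within K)"
    unfolding solK_def by blast
  from S2 obtain N2 where W2: "W2n1 n K D2" and N2: "negligible N2" and
    E2: "\<forall>t\<in>K - N2. (D2 (2*n-1) has_real_derivative (- (\<Sum>k<2*n. c k t * D2 k t) - lam * D2 0 t)) (at t within K)"
    unfolding solK_def by blast
  have W: "W2n1 n K (\<lambda>k t. p * D1 k t + q * D2 k t)" unfolding W2n1_def
  proof (intro conjI ballI allI impI)
    fix k t assume k: "k < 2*n-1" and t: "t \<in> K"
    have "(D1 k has_real_derivative D1 (Suc k) t) (at t within K)" using W1 k t unfolding W2n1_def by blast
    moreover have "(D2 k has_real_derivative D2 (Suc k) t) (at t within K)" using W2 k t unfolding W2n1_def by blast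
    ultimately show "((\<lambda>t. p * D1 k t + q * D2 k t) has_real_derivative p * D1 (Suc k) t + q * D2 (Suc k) t) (at t within K)"
      by (intro DERIV_add DERIV_cmult)
  next
    show "abs_cont_on K (\<lambda>t. p * D1 (2*n-1) t + q * D2 (2*n-1) t)"
      using W1 W2 unfolding W2n1_def by (intro abs_cont_lin) auto
  qed
  have "\<forall>t\<in>K - (N1 \<union> N2). ((\<lambda>t. p * D1 (2*n-1) t + q * D2 (2*n-1) t) has_real_derivative
      (- (\<Sum>k<2*n. c k t * (p * D1 k t + q * D2 k t)) - lam * (p * D1 0 t + q * D2 0 t))) (at t within K)"
  proof
    fix t assume t: "t \<in> K - (N1 \<union> N2)"
    have "((\<lambda>t. p * D1 (2*n-1) t + q * D2 (2*n-1) t) has_real_derivative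
      p * (- (\<Sum>k<2*n. c k t * D1 k t) - lam * D1 0 t) + q * (- (\<Sum>k<2*n. c k t * D2 k t) - lam * D2 0 t)) (at t within K)"
      using E1 E2 t by (intro DERIV_add DERIV_cmult) auto
    moreover have "p * (- (\<Sum>k<2*n. c k t * D1 k t) - lam * D1 0 t) + q * (- (\<Sum>k<2*n. c k t * D2 k t) - lam * D2 0 t)
       = - (\<Sum>k<2*n. c k t * (p * D1 k t + q * D2 k t)) - lam * (p * D1 0 t + q * D2 0 t)"
      by (simp add: algebra_simps sum.distrib sum_distrib_left)
    ultimately show "((\<lambda>t. p * D1 (2*n-1) t + q * D2 (2*n-1) t) has_real_derivative
      (- (\<Sum>k<2*n. c k t * (p * D1 k t + q * D2 k t)) - lam * (p * D1 0 t + q * D2 0 t))) (at t within K)"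
      by simp
  qed
  moreover have "negligible (N1 \<union> N2)" using N1 N2 by (rule negligible_Un)
  ultimately show ?thesis unfolding solK_def using W by blast
qed

lemma solK_refl:
  assumes n: "1 \<le> n" and S: "solK n K c lam D"
  shows "solK n ((\<lambda>t. m - t) ` K) (\<lambda>k t. (-1)^k * c k (m - t)) lam (\<lambda>k t. (-1)^k * D k (m - t))"
proof -
  from S obtain N where W: "W2n1 n K D" and N: "negligible N" and
    E: "\<forall>t\<in>K - N. (D (2*n-1) has_real_derivative (- (\<Sum>k<2*n. c k t * D k t) - lam * D 0 t)) (at t within K)"
    unfolding solK_def by blast
  have W': "W2n1 n ((\<lambda>t. m - t) ` K) (\<lambda>k t. (-1)^k * D k (m - t))" unfolding W2n1_def
  proof (intro conjI ballI allI impI)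
    fix k t assume k: "k < 2*n-1" and t: "t \<in> (\<lambda>t. m - t) ` K"
    then have "m - t \<in> K" by auto
    then have "(D k has_real_derivative D (Suc k) (m - t)) (at (m - t) within K)" using W k unfolding W2n1_def by blast
    from deriv_refl[OF this, of "(-1)^k"]
    show "((\<lambda>t. (-1)^k * D k (m - t)) has_real_derivative (-1)^(Suc k) * D (Suc k) (m - t)) (at t within (\<lambda>t. m - t) ` K)"
      by simp
  next
    have AC: "abs_cont_on ((\<lambda>t. m - t) ` K) (\<lambda>t. D (2*n-1) (m - t))"
    proof -
      have "abs_cont_on K (D (2*n-1))" using W unfolding W2n1_def by blast
      from abs_cont_refl[OF this, of m] show ?thesis .
    qed
    then have "abs_cont_on ((\<lambda>t. m - t) ` K) (\<lambda>t. (-1)^(2*n-1) * D (2*n-1) (m - t) + 0 * D (2*n-1) (m - t))"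
      using abs_cont_lin[OF AC AC, of "(-1)^(2*n-1)" 0] by simp
    then show "abs_cont_on ((\<lambda>t. m - t) ` K) (\<lambda>t. (-1)^(2*n-1) * D (2*n-1) (m - t))" by simp
  qed
  have "\<forall>t\<in>(\<lambda>t. m - t) ` K - (\<lambda>t. m - t) ` N. ((\<lambda>t. (-1)^(2*n-1) * D (2*n-1) (m - t)) has_real_derivative
      (- (\<Sum>k<2*n. (-1)^k * c k (m - t) * ((-1)^k * D k (m - t))) - lam * ((-1)^0 * D 0 (m - t)))) (at t within (\<lambda>t. m - t) ` K)"
  proof
    fix t assume t: "t \<in> (\<lambda>t. m - t) ` K - (\<lambda>t. m - t) ` N"
    then have mt: "m - t \<in> K - N" by (auto simp: image_iff)
    have s: "(\<Sum>k<2*n. (-1)^k * c k (m - t) * ((-1)^k * D k (m - t))) = (\<Sum>k<2*n. c k (m - t) * D k (m - t))"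
    proof (intro sum.cong refl)
      fix k
      have "(-1::real)^k * c k (m - t) * ((-1)^k * D k (m - t)) = ((-1)^k * (-1)^k) * (c k (m - t) * D k (m - t))"
        by (simp add: algebra_simps)
      then show "(-1::real)^k * c k (m - t) * ((-1)^k * D k (m - t)) = c k (m - t) * D k (m - t)"
        by (simp only: neg1_sq mult_1_left)
    qed
    have "(D (2*n-1) has_real_derivative (- (\<Sum>k<2*n. c k (m-t) * D k (m-t)) - lam * D 0 (m-t))) (at (m - t) within K)"
      using E mt by blast
    note th = deriv_refl[OF this, of "(-1)^(2*n-1)"]
    show "((\<lambda>t. (-1)^(2*n-1) * D (2*n-1) (m - t)) has_real_derivative
      (- (\<Sum>k<2*n. (-1)^k * c k (m - t) * ((-1)^k * D k (m - t))) - lam * ((-1)^0 * D 0 (m - t)))) (at t within (\<lambda>t. m - t) ` K)"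
      by (rule DERIV_cong[OF th]) (simp add: s odd_idx'[OF n])
  qed
  then show ?thesis unfolding solK_def using W' negligible_refl[OF N] by blast
qed

lemma solK_glue:
  assumes ab: "a \<le> b" and bd: "b \<le> d" and S1: "solK n {a..b} c lam D" and S2: "solK n {b..d} c lam D"
  shows "solK n {a..d} c lam D"
proof -
  from S1 obtain N1 where W1: "W2n1 n {a..b} D" and N1: "negligible N1" and
    E1: "\<forall>t\<in>{a..b} - N1. (D (2*n-1) has_real_derivative (- (\<Sum>k<2*n. c k t * D k t) - lam * D 0 t)) (at t within {a..b})"
    unfolding solK_def by blast
  from S2 obtain N2 where W2: "W2n1 n {b..d} D" and N2: "negligible N2" and
    E2: "\<forall>t\<in>{b..d} - N2. (D (2*n-1) has_real_derivative (- (\<Sum>k<2*n. c k t * D k t) - lam * D 0 t)) (at t within {b..d})"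
    unfolding solK_def by blast
  have W: "W2n1 n {a..d} D" unfolding W2n1_def
  proof (intro conjI ballI allI impI)
    fix k t assume k: "k < 2*n-1" and t: "t \<in> {a..d}"
    show "(D k has_real_derivative D (Suc k) t) (at t within {a..d})"
      by (rule deriv_glue[OF ab bd t]) (use W1 W2 k in \<open>auto simp: W2n1_def\<close>)
  next
    show "abs_cont_on {a..d} (D (2*n-1))"
      using W1 W2 unfolding W2n1_def by (intro abs_cont_glue[OF ab bd]) auto
  qed
  have "\<forall>t\<in>{a..d} - (N1 \<union> N2). (D (2*n-1) has_real_derivative (- (\<Sum>k<2*n. c k t * D k t) - lam * D 0 t)) (at t within {a..d})"
  proof
    fix t assume t: "t \<in> {a..d} - (N1 \<union> N2)"
    show "(D (2*n-1) has_real_derivative (- (\<Sum>k<2*n. c k t * D k t) - lam * D 0 t)) (at t within {a..d})"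
      by (rule deriv_glue[OF ab bd]) (use t E1 E2 in auto)
  qed
  then show ?thesis unfolding solK_def using W N1 N2 negligible_Un by blast
qed



definition VV :: "real \<Rightarrow> (nat \<Rightarrow> real \<Rightarrow> real) \<Rightarrow> nat \<Rightarrow> real \<Rightarrow> real" where
  "VV S D = (\<lambda>k t. D k t + (-1)^k * D k (2*S - t))"
definition WW :: "real \<Rightarrow> (nat \<Rightarrow> real \<Rightarrow> real) \<Rightarrow> nat \<Rightarrow> real \<Rightarrow> real" where
  "WW S D = (\<lambda>k t. D k t - (-1)^k * D k (2*S - t))"
definition EE :: "real \<Rightarrow> real \<Rightarrow> (nat \<Rightarrow> real \<Rightarrow> real) \<Rightarrow> nat \<Rightarrow> real \<Rightarrow> real" where
  "EE e S D = (\<lambda>k t. if t \<le> S then D k t else e * (-1)^k * D k (2*S - t))"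

lemma decomp:
  assumes n: "1 \<le> n" and S: "S > 0" and sol: "solK n {0..2*S} (refl_coef S c) lam D"
  shows "solK n {0..S} c lam (VV S D) \<and> solK n {0..S} c lam (WW S D)"
proof -
  have R0: "solK n {0..2*S} (\<lambda>k t. (-1)^k * refl_coef S c k (2*S - t)) lam (\<lambda>k t. (-1)^k * D k (2*S - t))"
    using solK_refl[OF n sol, of "2*S"] S by (simp add: refl_image)
  have R: "solK n {0..2*S} (refl_coef S c) lam (\<lambda>k t. (-1)^k * D k (2*S - t))"
  proof (rule solK_coef[OF R0, of "{S}"])
    fix k t assume t: "t \<in> {0..2*S}" "t \<notin> {S}"
    show "(-1)^k * refl_coef S c k (2*S - t) = refl_coef S c k t"
    proof (cases "t < S")
      case True
      then have "(-1::real)^k * refl_coef S c k (2*S - t) = ((-1)^k * (-1)^k) * c k t"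
        by (simp add: refl_coef_def)
      then show ?thesis using True by (simp add: neg1_sq refl_coef_def)
    next
      case False then show ?thesis using t by (simp add: refl_coef_def)
    qed
  qed simp
  have V2: "solK n {0..2*S} (refl_coef S c) lam (VV S D)"
    using solK_lin[OF sol R, of 1 1] by (simp add: VV_def)
  have W2: "solK n {0..2*S} (refl_coef S c) lam (WW S D)"
    using solK_lin[OF sol R, of 1 "-1"] by (simp add: WW_def)
  have V1: "solK n {0..S} (refl_coef S c) lam (VV S D)"
    by (rule solK_subset[OF _ V2]) (use S in auto)
  have W1: "solK n {0..S} (refl_coef S c) lam (WW S D)"
    by (rule solK_subset[OF _ W2]) (use S in auto)
  show ?thesis
    by (intro conjI solK_coef[OF V1, of "{}"] solK_coef[OF W1, of "{}"]) (auto simp: refl_coef_def)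
qed

lemma extend:
  assumes n: "1 \<le> n" and S: "S > 0" and sol: "solK n {0..S} c lam D"
    and bc: "\<And>k. k < 2*n \<Longrightarrow> D k S = e * (-1)^k * D k S"
  shows "solK n {0..2*S} (refl_coef S c) lam (EE e S D)"
proof -
  have L0: "solK n {0..S} (refl_coef S c) lam D"
    by (rule solK_coef[OF sol, of "{}"]) (auto simp: refl_coef_def)
  have L: "solK n {0..S} (refl_coef S c) lam (EE e S D)"
    by (rule solK_cong[OF n L0]) (auto simp: EE_def)
  have R0: "solK n {S..2*S} (\<lambda>k t. (-1)^k * c k (2*S - t)) lam (\<lambda>k t. (-1)^k * D k (2*S - t))"
    using solK_refl[OF n sol, of "2*S"] by (simp add: refl_image)
  have R1: "solK n {S..2*S} (\<lambda>k t. (-1)^k * c k (2*S - t)) lam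
     (\<lambda>k t. e * ((-1)^k * D k (2*S - t)) + 0 * ((-1)^k * D k (2*S - t)))"
    by (rule solK_lin[OF R0 R0])
  have R2: "solK n {S..2*S} (\<lambda>k t. (-1)^k * c k (2*S - t)) lam (EE e S D)"
  proof (rule solK_cong[OF n R1])
    fix k t assume k: "k < 2*n" and t: "t \<in> {S..2*S}"
    show "e * ((-1)^k * D k (2*S - t)) + 0 * ((-1)^k * D k (2*S - t)) = EE e S D k t"
    proof (cases "t = S")
      case True then show ?thesis using bc[OF k] by (simp add: EE_def mult.assoc)
    next
      case False then show ?thesis using t by (simp add: EE_def mult.assoc)
    qed
  qed
  have R: "solK n {S..2*S} (refl_coef S c) lam (EE e S D)"
    by (rule solK_coef[OF R2, of "{S}"]) (auto simp: refl_coef_def)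
  show ?thesis by (rule solK_glue[OF _ _ L R]) (use S in auto)
qed

lemma ext_eig:
  assumes n: "1 \<le> n" and S: "S > 0" and lam: "lam \<in> Eig n S c BCa"
    and bc: "\<And>D. BCa D \<Longrightarrow> (\<forall>k<2*n. D k S = e * (-1)^k * D k S) \<and> BCb (EE e S D)"
  shows "lam \<in> Eig n (2*S) (refl_coef S c) BCb"
proof -
  obtain D where sol: "solK n {0..S} c lam D" and b: "BCa D" and nz: "\<exists>t\<in>{0..S}. D 0 t \<noteq> 0"
    using lam unfolding Eig_def is_eig_iff by blast
  have s: "solK n {0..2*S} (refl_coef S c) lam (EE e S D)"
    by (rule extend[OF n S sol]) (use bc[OF b] in blast)
  have "\<exists>t\<in>{0..2*S}. EE e S D 0 t \<noteq> 0" using nz S by (auto simp: EE_def)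
  then show ?thesis unfolding Eig_def is_eig_iff using s bc[OF b] by blast
qed

lemma dec_eig:
  assumes n: "1 \<le> n" and S: "S > 0" and lam: "lam \<in> Eig n (2*S) (refl_coef S c) BC"
    and bc: "\<And>D. BC D \<Longrightarrow> BCv (VV S D) \<and> BCw (WW S D)"
  shows "lam \<in> Eig n S c BCv \<union> Eig n S c BCw"
proof -
  obtain D where sol: "solK n {0..2*S} (refl_coef S c) lam D" and b: "BC D" and nz: "\<exists>t\<in>{0..2*S}. D 0 t \<noteq> 0"
    using lam unfolding Eig_def is_eig_iff by blast
  note d = decomp[OF n S sol]
  have "(\<exists>t\<in>{0..S}. VV S D 0 t \<noteq> 0) \<or> (\<exists>t\<in>{0..S}. WW S D 0 t \<noteq> 0)"
  proof (rule ccontr)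
    assume "\<not> ?thesis"
    then have z: "\<And>t. t \<in> {0..S} \<Longrightarrow> D 0 t + D 0 (2*S - t) = 0 \<and> D 0 t - D 0 (2*S - t) = 0"
      by (auto simp: VV_def WW_def)
    obtain t where t: "t \<in> {0..2*S}" "D 0 t \<noteq> 0" using nz by blast
    show False
    proof (cases "t \<le> S")
      case True then show False using z[of t] t by auto
    next
      case False
      then have "2*S - t \<in> {0..S}" using t by auto
      from z[OF this] show False using t by auto
    qed
  qed
  then show ?thesis unfolding Eig_def is_eig_iff using d bc[OF b] by blast
qed

lemma chk_eig:
  assumes n: "1 \<le> n" and lam: "lam \<in> Eig n T c BCa"
    and bc: "\<And>D. BCa D \<Longrightarrow> BCb (\<lambda>k t. (-1)^k * D k (T - t))"
  shows "lam \<in> Eig n T (check_coef T c) BCb"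
proof -
  obtain D where sol: "solK n {0..T} c lam D" and b: "BCa D" and nz: "\<exists>t\<in>{0..T}. D 0 t \<noteq> 0"
    using lam unfolding Eig_def is_eig_iff by blast
  have s: "solK n {0..T} (check_coef T c) lam (\<lambda>k t. (-1)^k * D k (T - t))"
    using solK_refl[OF n sol, of T] by (simp add: refl_image check_coef_def[abs_def])
  obtain t where t: "t \<in> {0..T}" "D 0 t \<noteq> 0" using nz by blast
  then have "T - t \<in> {0..T}" "(\<lambda>k t. (-1)^k * D k (T - t)) 0 (T - t) \<noteq> 0" by auto
  then show ?thesis unfolding Eig_def is_eig_iff using s bc[OF b] by blast
qed



lemma all_lt_2n: "(\<forall>k<2*(n::nat). P k) \<longleftrightarrow> (\<forall>j<n. P (2*j) \<and> P (2*j+1))"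
proof
  assume "\<forall>k<2*n. P k" then show "\<forall>j<n. P (2*j) \<and> P (2*j+1)" by auto
next
  assume h: "\<forall>j<n. P (2*j) \<and> P (2*j+1)"
  show "\<forall>k<2*n. P k"
  proof (intro allI impI)
    fix k assume k: "k < 2*n"
    have "k = 2*(k div 2) \<or> k = 2*(k div 2) + 1" by presburger
    moreover have "k div 2 < n" using k by simp
    ultimately show "P k" using h by metis
  qed
qed

lemma pe[simp]: "(-1::real)^(2*j) = 1" by simp
lemma po[simp]: "(-1::real)^(2*j+1) = -1" by simp
lemma po'[simp]: "(-1::real)^(Suc (2*j)) = -1" by simp

lemmas bcdefs = bcN_def bcD_def bcM1_def bcM2_def bcP_def bcA_def EE_def VV_def WW_def

lemma b1: "S > 0 \<Longrightarrow> bcN n S D \<Longrightarrow> (\<forall>k<2*n. D k S = 1 * (-1)^k * D k S) \<and> bcP n (2*S) (EE 1 S D)"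
  by (auto simp: bcdefs all_lt_2n)
lemma b2: "S > 0 \<Longrightarrow> bcD n S D \<Longrightarrow> (\<forall>k<2*n. D k S = -1 * (-1)^k * D k S) \<and> bcP n (2*S) (EE (-1) S D)"
  by (auto simp: bcdefs all_lt_2n)
lemma b3: "S > 0 \<Longrightarrow> bcN n S D \<Longrightarrow> (\<forall>k<2*n. D k S = 1 * (-1)^k * D k S) \<and> bcN n (2*S) (EE 1 S D)"
  by (auto simp: bcdefs all_lt_2n)
lemma b4: "S > 0 \<Longrightarrow> bcM1 n S D \<Longrightarrow> (\<forall>k<2*n. D k S = -1 * (-1)^k * D k S) \<and> bcN n (2*S) (EE (-1) S D)"
  by (auto simp: bcdefs all_lt_2n)
lemma b5: "S > 0 \<Longrightarrow> bcD n S D \<Longrightarrow> (\<forall>k<2*n. D k S = -1 * (-1)^k * D k S) \<and> bcD n (2*S) (EE (-1) S D)"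
  by (auto simp: bcdefs all_lt_2n)
lemma b6: "S > 0 \<Longrightarrow> bcM2 n S D \<Longrightarrow> (\<forall>k<2*n. D k S = 1 * (-1)^k * D k S) \<and> bcD n (2*S) (EE 1 S D)"
  by (auto simp: bcdefs all_lt_2n)
lemma b7: "S > 0 \<Longrightarrow> bcM1 n S D \<Longrightarrow> (\<forall>k<2*n. D k S = -1 * (-1)^k * D k S) \<and> bcA n (2*S) (EE (-1) S D)"
  by (auto simp: bcdefs all_lt_2n)
lemma b8: "S > 0 \<Longrightarrow> bcM2 n S D \<Longrightarrow> (\<forall>k<2*n. D k S = 1 * (-1)^k * D k S) \<and> bcA n (2*S) (EE 1 S D)"
  by (auto simp: bcdefs all_lt_2n)

lemma d9: "bcP n (2*S) D \<Longrightarrow> bcN n S (VV S D) \<and> bcD n S (WW S D)"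
  by (auto simp: bcdefs all_lt_2n)
lemma d10: "bcN n (2*S) D \<Longrightarrow> bcN n S (VV S D) \<and> bcM1 n S (WW S D)"
  by (auto simp: bcdefs all_lt_2n)
lemma d11: "bcD n (2*S) D \<Longrightarrow> bcM2 n S (VV S D) \<and> bcD n S (WW S D)"
  by (auto simp: bcdefs all_lt_2n)
lemma d12: "bcA n (2*S) D \<Longrightarrow> bcM2 n S (VV S D) \<and> bcM1 n S (WW S D)"
  by (auto simp: bcdefs all_lt_2n)

lemma c13: "bcM1 n T D \<Longrightarrow> bcM2 n T (\<lambda>k t. (-1)^k * D k (T - t))"
  by (auto simp: bcdefs)
lemma c14: "bcM2 n T D \<Longrightarrow> bcM1 n T (\<lambda>k t. (-1)^k * D k (T - t))"
  by (auto simp: bcdefs)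



lemma G1: assumes n: "1 \<le> n" and S: "S > 0" shows
  "Eig n S c (bcN n S) \<union> Eig n S c (bcD n S) = Eig n (2*S) (refl_coef S c) (bcP n (2*S))"
proof (rule equalityI)
  have 1: "Eig n S c (bcN n S) \<subseteq> Eig n (2*S) (refl_coef S c) (bcP n (2*S))"
    using ext_eig[where e="1" and BCa="bcN n S" and BCb="bcP n (2*S)", OF n S _ b1[OF S]] by blast
  have 2: "Eig n S c (bcD n S) \<subseteq> Eig n (2*S) (refl_coef S c) (bcP n (2*S))"
    using ext_eig[where e="-1" and BCa="bcD n S" and BCb="bcP n (2*S)", OF n S _ b2[OF S]] by blast
  show "Eig n S c (bcN n S) \<union> Eig n S c (bcD n S) \<subseteq> Eig n (2*S) (refl_coef S c) (bcP n (2*S))"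
    using 1 2 by blast
  show "Eig n (2*S) (refl_coef S c) (bcP n (2*S)) \<subseteq> Eig n S c (bcN n S) \<union> Eig n S c (bcD n S)"
    using dec_eig[where BC="bcP n (2*S)" and BCv="bcN n S" and BCw="bcD n S", OF n S _ d9] by blast
qed

lemma G2: assumes n: "1 \<le> n" and S: "S > 0" shows
  "Eig n S c (bcN n S) \<union> Eig n S c (bcM1 n S) = Eig n (2*S) (refl_coef S c) (bcN n (2*S))"
proof (rule equalityI)
  have 1: "Eig n S c (bcN n S) \<subseteq> Eig n (2*S) (refl_coef S c) (bcN n (2*S))"
    using ext_eig[where e="1" and BCa="bcN n S" and BCb="bcN n (2*S)", OF n S _ b3[OF S]] by blast
  have 2: "Eig n S c (bcM1 n S) \<subseteq> Eig n (2*S) (refl_coef S c) (bcN n (2*S))"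
    using ext_eig[where e="-1" and BCa="bcM1 n S" and BCb="bcN n (2*S)", OF n S _ b4[OF S]] by blast
  show "Eig n S c (bcN n S) \<union> Eig n S c (bcM1 n S) \<subseteq> Eig n (2*S) (refl_coef S c) (bcN n (2*S))"
    using 1 2 by blast
  show "Eig n (2*S) (refl_coef S c) (bcN n (2*S)) \<subseteq> Eig n S c (bcN n S) \<union> Eig n S c (bcM1 n S)"
    using dec_eig[where BC="bcN n (2*S)" and BCv="bcN n S" and BCw="bcM1 n S", OF n S _ d10] by blast
qed

lemma G3: assumes n: "1 \<le> n" and S: "S > 0" shows
  "Eig n S c (bcD n S) \<union> Eig n S c (bcM2 n S) = Eig n (2*S) (refl_coef S c) (bcD n (2*S))"
proof (rule equalityI)
  have 1: "Eig n S c (bcD n S) \<subseteq> Eig n (2*S) (refl_coef S c) (bcD n (2*S))"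
    using ext_eig[where e="-1" and BCa="bcD n S" and BCb="bcD n (2*S)", OF n S _ b5[OF S]] by blast
  have 2: "Eig n S c (bcM2 n S) \<subseteq> Eig n (2*S) (refl_coef S c) (bcD n (2*S))"
    using ext_eig[where e="1" and BCa="bcM2 n S" and BCb="bcD n (2*S)", OF n S _ b6[OF S]] by blast
  show "Eig n S c (bcD n S) \<union> Eig n S c (bcM2 n S) \<subseteq> Eig n (2*S) (refl_coef S c) (bcD n (2*S))"
    using 1 2 by blast
  show "Eig n (2*S) (refl_coef S c) (bcD n (2*S)) \<subseteq> Eig n S c (bcD n S) \<union> Eig n S c (bcM2 n S)"
    using dec_eig[where BC="bcD n (2*S)" and BCv="bcM2 n S" and BCw="bcD n S", OF n S _ d11] by blast
qed

lemma G4: assumes n: "1 \<le> n" and S: "S > 0" shows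
  "Eig n S c (bcM1 n S) \<union> Eig n S c (bcM2 n S) = Eig n (2*S) (refl_coef S c) (bcA n (2*S))"
proof (rule equalityI)
  have 1: "Eig n S c (bcM1 n S) \<subseteq> Eig n (2*S) (refl_coef S c) (bcA n (2*S))"
    using ext_eig[where e="-1" and BCa="bcM1 n S" and BCb="bcA n (2*S)", OF n S _ b7[OF S]] by blast
  have 2: "Eig n S c (bcM2 n S) \<subseteq> Eig n (2*S) (refl_coef S c) (bcA n (2*S))"
    using ext_eig[where e="1" and BCa="bcM2 n S" and BCb="bcA n (2*S)", OF n S _ b8[OF S]] by blast
  show "Eig n S c (bcM1 n S) \<union> Eig n S c (bcM2 n S) \<subseteq> Eig n (2*S) (refl_coef S c) (bcA n (2*S))"
    using 1 2 by blast
  show "Eig n (2*S) (refl_coef S c) (bcA n (2*S)) \<subseteq> Eig n S c (bcM1 n S) \<union> Eig n S c (bcM2 n S)"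
    using dec_eig[where BC="bcA n (2*S)" and BCv="bcM2 n S" and BCw="bcM1 n S", OF n S _ d12] by blast
qed

lemma check_check: "check_coef T (check_coef T c) = c"
  by (auto simp: check_coef_def fun_eq_iff neg1_sq mult.assoc[symmetric])

lemma G5: "1 \<le> n \<Longrightarrow> Eig n T c (bcM1 n T) = Eig n T (check_coef T c) (bcM2 n T)"
proof
  assume n: "1 \<le> n"
  show "Eig n T c (bcM1 n T) \<subseteq> Eig n T (check_coef T c) (bcM2 n T)"
    using chk_eig[where BCa="bcM1 n T" and BCb="bcM2 n T", OF n _ c13] by blast
  have "Eig n T (check_coef T c) (bcM2 n T) \<subseteq> Eig n T (check_coef T (check_coef T c)) (bcM1 n T)"
    using chk_eig[where BCa="bcM2 n T" and BCb="bcM1 n T", OF n _ c14] by blast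
  then show "Eig n T (check_coef T c) (bcM2 n T) \<subseteq> Eig n T c (bcM1 n T)" by (simp add: check_check)
qed

lemma G6: "1 \<le> n \<Longrightarrow> Eig n T c (bcM2 n T) = Eig n T (check_coef T c) (bcM1 n T)"
proof
  assume n: "1 \<le> n"
  show "Eig n T c (bcM2 n T) \<subseteq> Eig n T (check_coef T c) (bcM1 n T)"
    using chk_eig[where BCa="bcM2 n T" and BCb="bcM1 n T", OF n _ c14] by blast
  have "Eig n T (check_coef T c) (bcM1 n T) \<subseteq> Eig n T (check_coef T (check_coef T c)) (bcM2 n T)"
    using chk_eig[where BCa="bcM1 n T" and BCb="bcM2 n T", OF n _ c13] by blast
  then show "Eig n T (check_coef T c) (bcM1 n T) \<subseteq> Eig n T c (bcM2 n T)" by (simp add: check_check)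
qed

theorem mainTheorem6:
  fixes n :: nat and T \<alpha> :: real and a :: "nat \<Rightarrow> real \<Rightarrow> real"
  assumes "n \<ge> 1" and "T > 0" and "\<alpha> \<ge> 1"
    and "\<forall>k<2*n. in_Lp \<alpha> {0..T} (a k)"
  defines "a1 \<equiv> refl_coef T a" and "a2 \<equiv> refl_coef (2*T) (refl_coef T a)"
    and "ac \<equiv> check_coef T a"
  shows "(Eig n T a (bcN n T) \<union> Eig n T a (bcD n T) = Eig n (2*T) a1 (bcP n (2*T))) \<and>
    (Eig n T a (bcN n T) \<union> Eig n T a (bcM1 n T) = Eig n (2*T) a1 (bcN n (2*T))) \<and>
    (Eig n T a (bcD n T) \<union> Eig n T a (bcM2 n T) = Eig n (2*T) a1 (bcD n (2*T))) \<and>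
    (Eig n T a (bcM1 n T) \<union> Eig n T a (bcM2 n T) = Eig n (2*T) a1 (bcA n (2*T))) \<and>
    (Eig n T a (bcN n T) \<union> Eig n T a (bcD n T) \<union> Eig n T a (bcM1 n T)
            \<union> Eig n T a (bcM2 n T) = Eig n (4*T) a2 (bcP n (4*T))) \<and>
    (Eig n T a (bcM1 n T) = Eig n T ac (bcM2 n T)) \<and>
    (Eig n T a (bcM2 n T) = Eig n T ac (bcM1 n T))"
proof -
  note n = assms(1) and T = assms(2)
  have T2: "2*T > 0" using T by simp
  have e4: "2*(2*T) = 4*T" by simp
  have g1: "Eig n T a (bcN n T) \<union> Eig n T a (bcD n T) = Eig n (2*T) a1 (bcP n (2*T))"
    unfolding a1_def by (rule G1[OF n T])
  have g2: "Eig n T a (bcN n T) \<union> Eig n T a (bcM1 n T) = Eig n (2*T) a1 (bcN n (2*T))"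
    unfolding a1_def by (rule G2[OF n T])
  have g3: "Eig n T a (bcD n T) \<union> Eig n T a (bcM2 n T) = Eig n (2*T) a1 (bcD n (2*T))"
    unfolding a1_def by (rule G3[OF n T])
  have g4: "Eig n T a (bcM1 n T) \<union> Eig n T a (bcM2 n T) = Eig n (2*T) a1 (bcA n (2*T))"
    unfolding a1_def by (rule G4[OF n T])
  have g5: "Eig n (2*T) a1 (bcN n (2*T)) \<union> Eig n (2*T) a1 (bcD n (2*T)) = Eig n (4*T) a2 (bcP n (4*T))"
    using G1[OF n T2, of a1] unfolding a2_def a1_def e4 .
  have g6: "Eig n T a (bcN n T) \<union> Eig n T a (bcD n T) \<union> Eig n T a (bcM1 n T)
            \<union> Eig n T a (bcM2 n T) = Eig n (4*T) a2 (bcP n (4*T))"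
    using g2 g3 g5 by blast
  show ?thesis using g1 g2 g3 g4 g6 G5[OF n, of T a] G6[OF n, of T a] unfolding ac_def by blast
qed


end
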